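(* Let $r>0$ and $x,y\in\mathbb{R}^2$ with $d:=\|x-y\|>r$. Let $p_1,p_2$ be the two intersection points of the circles $\partial B(x,r)$ and $\partial B(y,d)$. Then $W(x,y;r)=B(p_1,r)\cap B(p_2,r)$.
   Context: $B(z,\rho)=\{w\in\mathbb{R}^2:\|z-w\|\le\rho\}$ is the closed Euclidean ball. For $x,y\in\mathbb{R}^2$ and $r>0$, $W(x,y;r):=\{z\in\mathbb{R}^2: B(z,r)\supseteq B(x,r)\cap B(y,\|x-y\|)\}$. *)

theory Defs
  imports "HOL-Analysis.Analysis"
begin

definition W :: "real^2 \<Rightarrow> real^2 \<Rightarrow> real \<Rightarrow> (real^2) set" where
  "W x y r = {z. cball x r \<inter> cball y (dist x y) \<subseteq> cball z r}"

end

theory Submission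
  imports Defs
begin

lemma norm2_decomp:
  fixes q c e :: "real^2"
  assumes "c \<bullet> e = 0" "c \<noteq> 0" "e \<noteq> 0"
  shows "q \<bullet> q = (q \<bullet> c)^2/(c \<bullet> c) + (q \<bullet> e)^2/(e \<bullet> e)"
proof -
  have cc: "c \<bullet> c > 0" "e \<bullet> e > 0" using assms by auto
  have h: "c$1*e$1 + c$2*e$2 = 0" using assms(1) by (simp add: inner_vec_def sum_2)
  have key: "(qa*ca+qb*cb)^2*(ea*ea+eb*eb) + (qa*ea+qb*eb)^2*(ca*ca+cb*cb)
     = (qa*qa+qb*qb)*(ca*ca+cb*cb)*(ea*ea+eb*eb) + (ca*ea+cb*eb)*(2*(qa*ca+qb*cb)*(qa*ea+qb*eb) - (qa*qa+qb*qb)*(ca*ea+cb*eb))"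
    for qa qb ca cb ea eb::real by algebra
  have "(q \<bullet> c)^2*(e \<bullet> e) + (q \<bullet> e)^2*(c \<bullet> c) = (q \<bullet> q)*(c \<bullet> c)*(e \<bullet> e)"
    using key[where qa="q$1" and qb="q$2" and ca="c$1" and cb="c$2" and ea="e$1" and eb="e$2"] h unfolding inner_vec_def sum_2 inner_real_def by simp
  then show ?thesis using cc by (simp add: field_simps)
qed

lemma real_core:
 fixes A B r D z1 z2 w1 w2 :: real
 assumes A: "A>0" and B: "B>0" and AB: "A^2+B^2=r^2" and AD: "2*A*D = r^2" and Dr: "D > r" and r: "r>0"
 and g1: "(z1-A)^2+(z2-B)^2 \<le> r^2" and g2: "(z1-A)^2+(z2+B)^2 \<le> r^2"
 and h1: "w1^2+w2^2 \<le> r^2" and h2: "(w1-D)^2+w2^2 \<le> D^2"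
 shows "(z1-w1)^2+(z2-w2)^2 \<le> r^2"
proof -
  have "A^2 < r^2" using AB B by (smt (verit) zero_less_power)
  have "r*r < r*D" using r Dr by simp
  moreover have "r^2 = r*r" by (simp add: power2_eq_square)
  ultimately have "(2*A)*D < r*D" using AD by linarith
  hence A2: "2*A < r" using Dr r by (meson less_le_not_le mult_right_less_imp_less order_less_trans)
  hence Ar: "A < r" using A by simp
  have "(z2-B)^2+(z2+B)^2 = 2*z2^2+2*B^2" by (simp add: power2_eq_square algebra_simps)
  moreover have "z2^2 \<ge> 0" by simp
  ultimately have "(z1-A)^2 \<le> A^2" using g1 g2 AB by linarith
  hence "\<bar>z1-A\<bar> \<le> A" using A abs_le_square_iff[of "z1-A" A] by simp
  hence z1: "0 \<le> z1" "z1 \<le> 2*A" by auto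
  have w2: "w2^2 \<le> B^2"
  proof (cases "w1 \<ge> A")
    case True
    hence "A^2 \<le> w1^2" using A by (simp add: power_mono)
    then show ?thesis using h1 AB by linarith
  next
    case False
    have "w2^2 \<le> 2*D*w1 - w1^2" using h2 by (simp add: power2_eq_square algebra_simps)
    moreover have "(A - w1)*(2*D - A - w1) \<ge> 0" using False Ar Dr by simp
    ultimately show ?thesis using AB AD by (simp add: power2_eq_square algebra_simps)
  qed
  have w3: "(w1-2*A)^2+w2^2 \<le> r^2"
  proof (cases "w1 \<ge> A")
    case True
    have "A*(w1-A) \<ge> 0" using True A by simp
    then show ?thesis using h1 by (simp add: power2_eq_square algebra_simps)
  next
    case False
    have "w1^2+w2^2 \<le> 2*D*w1" using h2 by (simp add: power2_eq_square algebra_simps)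
    moreover have "(2*D-4*A)*(A - w1) \<ge> 0" using False A2 Dr A by simp
    ultimately show ?thesis using AD by (simp add: power2_eq_square algebra_simps)
  qed
  define s where "s = w2/B"
  have "s^2 \<le> 1" using w2 B by (simp add: s_def power_divide)
  hence "\<bar>s\<bar> \<le> 1" using abs_le_square_iff[of s 1] by simp
  hence s: "-1 \<le> s" "s \<le> 1" by auto
  define t where "t = z1/(2*A)"
  have t: "0 \<le> t" "t \<le> 1" using z1 A by (auto simp: t_def)
  have id: "r^2 - ((z1-w1)^2+(z2-w2)^2) = (1+s)/2*(r^2 - ((z1-A)^2+(z2-B)^2)) + (1-s)/2*(r^2-((z1-A)^2+(z2+B)^2)) + (1-t)*(r^2-(w1^2+w2^2)) + t*(r^2-((w1-2*A)^2+w2^2))"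
    unfolding s_def t_def using A B AB[symmetric] by (simp add: field_simps power2_eq_square)
  have "0 \<le> (1+s)/2*(r^2 - ((z1-A)^2+(z2-B)^2)) + (1-s)/2*(r^2-((z1-A)^2+(z2+B)^2)) + (1-t)*(r^2-(w1^2+w2^2)) + t*(r^2-((w1-2*A)^2+w2^2))"
    using s t g1 g2 h1 w3 by (intro add_nonneg_nonneg mult_nonneg_nonneg) auto
  then show ?thesis using id by linarith
qed
lemma sq_le_iff: "(u::real) \<ge> 0 \<Longrightarrow> r \<ge> 0 \<Longrightarrow> u \<le> r \<longleftrightarrow> u^2 \<le> r^2"
  by (meson power2_le_imp_le power_mono)

lemma inner_expand: "(a - b) \<bullet> (a - b) = a \<bullet> a - 2 * (a \<bullet> b) + b \<bullet> (b::real^2)"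
  by (simp add: inner_diff_left inner_diff_right inner_commute)

theorem mainTheorem10:
  fixes x y p1 p2 :: "real^2" and r :: real
  assumes "r > 0"
    and "dist x y > r"
    and "p1 \<noteq> p2"
    and "dist p1 x = r" and "dist p1 y = dist x y"
    and "dist p2 x = r" and "dist p2 y = dist x y"
  shows "W x y r = cball p1 r \<inter> cball p2 r"
proof
  show "W x y r \<subseteq> cball p1 r \<inter> cball p2 r"
  proof
    fix z assume "z \<in> W x y r"
    hence sub: "cball x r \<inter> cball y (dist x y) \<subseteq> cball z r" by (simp add: W_def)
    have "p1 \<in> cball x r \<inter> cball y (dist x y)" "p2 \<in> cball x r \<inter> cball y (dist x y)"
      using assms by (auto simp: dist_commute)
    hence "p1 \<in> cball z r" "p2 \<in> cball z r" using sub by blast+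
    then show "z \<in> cball p1 r \<inter> cball p2 r" by (simp add: dist_commute)
  qed
next
  define d where "d = dist x y"
  define P1 where "P1 = p1 - x"
  define P2 where "P2 = p2 - x"
  define Y where "Y = y - x"
  have r: "r > 0" and dr: "d > r" using assms by (auto simp: d_def)
  have nP1: "P1 \<bullet> P1 = r^2" using assms(4) by (simp add: P1_def dist_norm power2_norm_eq_inner[symmetric])
  have nP2: "P2 \<bullet> P2 = r^2" using assms(6) by (simp add: P2_def dist_norm power2_norm_eq_inner[symmetric])
  have nY: "Y \<bullet> Y = d^2" by (simp add: Y_def d_def dist_norm power2_norm_eq_inner[symmetric] norm_minus_commute)
  have "(P1 - Y) \<bullet> (P1 - Y) = d^2" using assms(5)
    by (simp add: P1_def Y_def d_def dist_norm power2_norm_eq_inner[symmetric])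
  hence P1Y: "P1 \<bullet> Y = r^2/2" using nP1 nY inner_expand[of P1 Y] by simp
  have "(P2 - Y) \<bullet> (P2 - Y) = d^2" using assms(7)
    by (simp add: P2_def Y_def d_def dist_norm power2_norm_eq_inner[symmetric])
  hence P2Y: "P2 \<bullet> Y = r^2/2" using nP2 nY inner_expand[of P2 Y] by simp
  define c where "c = (1/2) *\<^sub>R (P1 + P2)"
  define e where "e = (1/2) *\<^sub>R (P1 - P2)"
  have ce: "c \<bullet> e = 0" using nP1 nP2
    by (simp add: c_def e_def inner_add_left inner_diff_right inner_add_right inner_diff_left inner_commute)
  have eY: "e \<bullet> Y = 0" using P1Y P2Y by (simp add: e_def inner_diff_left)
  have cY: "c \<bullet> Y = r^2/2" using P1Y P2Y by (simp add: c_def inner_add_left)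
  have e0: "e \<noteq> 0" using assms(3) by (simp add: e_def P1_def P2_def)
  have c0: "c \<noteq> 0" using cY r by auto
  have cc_ee: "c \<bullet> c + e \<bullet> e = r^2" using nP1 nP2
    by (simp add: c_def e_def inner_add_left inner_diff_right inner_add_right inner_diff_left inner_commute algebra_simps)
  define A where "A = norm c"
  define B where "B = norm e"
  have A: "A > 0" and B: "B > 0" using c0 e0 by (auto simp: A_def B_def)
  have cc: "c \<bullet> c = A^2" and ee: "e \<bullet> e = B^2" by (simp_all add: A_def B_def power2_norm_eq_inner)
  have AB: "A^2 + B^2 = r^2" using cc_ee cc ee by simp
  define f1 where "f1 q = (q \<bullet> c) / A" for q
  define f2 where "f2 q = (q \<bullet> e) / B" for q
  have nrm: "(q - s) \<bullet> (q - s) = (f1 q - f1 s)^2 + (f2 q - f2 s)^2" for q s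
  proof -
    have "(q - s) \<bullet> (q - s) = ((q-s) \<bullet> c)^2/(c \<bullet> c) + ((q-s) \<bullet> e)^2/(e \<bullet> e)"
      by (rule norm2_decomp[OF ce c0 e0])
    also have "\<dots> = (f1 q - f1 s)^2 + (f2 q - f2 s)^2"
      unfolding cc ee f1_def f2_def using A B
      by (simp add: inner_diff_left power_divide diff_divide_distrib[symmetric])
    finally show ?thesis .
  qed
  have P1c: "f1 P1 = A" "f2 P1 = B" "f1 P2 = A" "f2 P2 = - B"
  proof -
    have P1e: "P1 = c + e" "P2 = c - e" by (simp_all add: c_def e_def algebra_simps scaleR_2[symmetric])
    show "f1 P1 = A" "f2 P1 = B" "f1 P2 = A" "f2 P2 = - B" unfolding f1_def f2_def P1e using A B ce cc ee
      by (simp_all add: inner_add_left inner_diff_left inner_commute[of e c] power2_eq_square)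
  qed
  define D where "D = f1 Y"
  have f2Y: "f2 Y = 0" using eY by (simp add: f2_def inner_commute)
  have D: "2*A*D = r^2" using cY A by (simp add: D_def f1_def inner_commute)
  have f10: "f1 0 = 0" "f2 0 = 0" by (simp_all add: f1_def f2_def)
  have "Y \<bullet> Y = D^2" using nrm[of Y 0] f2Y f10 by (simp add: D_def)
  hence DD: "D^2 = d^2" using nY by simp
  have "0 < (2*A)*D" using D r by simp
  moreover have "0 < 2*A" using A by simp
  ultimately have D0: "D > 0" by (rule zero_less_mult_pos)
  have Dd: "D = d" by (rule power2_eq_imp_eq[OF DD]) (use D0 dr r in auto)
  have DR: "D > r" using Dd dr by linarith
  show "cball p1 r \<inter> cball p2 r \<subseteq> W x y r"
  proof
    fix z assume z: "z \<in> cball p1 r \<inter> cball p2 r"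
    show "z \<in> W x y r" unfolding W_def
    proof (clarify)
      fix w assume w1: "w \<in> cball x r" and w2: "w \<in> cball y (dist x y)"
      define Z where "Z = z - x"
      define V where "V = w - x"
      have "dist p1 z ^2 \<le> r^2" "dist p2 z ^2 \<le> r^2" "dist x w ^2 \<le> r^2" "dist y w ^2 \<le> d^2"
        using z w1 w2 r dr by (auto simp: d_def intro!: power_mono)
      hence "(Z - P1) \<bullet> (Z - P1) \<le> r^2" "(Z - P2) \<bullet> (Z - P2) \<le> r^2" "(V - 0) \<bullet> (V - 0) \<le> r^2" "(V - Y) \<bullet> (V - Y) \<le> d^2"
        by (simp_all add: Z_def V_def P1_def P2_def Y_def dist_norm power2_norm_eq_inner[symmetric] norm_minus_commute)
      hence g: "(f1 Z - A)^2 + (f2 Z - B)^2 \<le> r^2" "(f1 Z - A)^2 + (f2 Z + B)^2 \<le> r^2"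
        "(f1 V)^2 + (f2 V)^2 \<le> r^2" "(f1 V - D)^2 + (f2 V)^2 \<le> D^2"
        unfolding nrm P1c f10 f2Y D_def[symmetric] using Dd by simp_all
      have "(f1 Z - f1 V)^2 + (f2 Z - f2 V)^2 \<le> r^2"
        using real_core[OF A B AB D DR r g(1) g(2) g(3) g(4)] .
      hence "(Z - V) \<bullet> (Z - V) \<le> r^2" by (simp add: nrm)
      moreover have "Z - V = z - w" by (simp add: Z_def V_def)
      ultimately have "(z - w) \<bullet> (z - w) \<le> r^2" by (simp only:)
      hence dzw: "dist z w ^2 \<le> r^2" by (metis dist_norm power2_norm_eq_inner)
      have "dist z w \<le> r" using power2_le_imp_le[OF dzw] r by simp
      thus "w \<in> cball z r" by simp
    qed
  qed
qed

end
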